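(* Let $\mathbf G_*=(\partial:G_1\to G_0)$ be a crossed module. The homomorphism $\delta:G_1\to\mathbf Z_0(\mathbf G_* )$ together with the bracket $\{(x,\xi),(y,\eta)\}:=\xi(y)$ is a braided crossed module, whose associated crossed module (with action ${}^{(x,\xi)}a:=\{(x,\xi),\delta a\}\,a$) is the crossed module $\delta:G_1\to\mathbf Z_0(\mathbf G_* )$ with action ${}^{(x,\xi)}a={}^xa$. This braided crossed module is denoted $\mathbf Z_*(\mathbf G_* )$ and called the centre of $\mathbf G_*$.
   Context: A crossed module $\mathbf G_*$: groups $G_1,G_0$, a homomorphism $\partial:G_1\to G_0$ and a left action $(x,a)\mapsto{}^xa$ of $G_0$ on $G_1$ by automorphisms, with $\partial({}^x a)=x\partial(a)x^{-1}$ and ${}^{\partial(b)}a=bab^{-1}$. Commutators $[x,y]=xyx^{-1}y^{-1}$. A braided crossed module is a group homomorphism $\partial:H_1\to H_0$ with a map $\{-,-\}:H_0\times H_0\to H_1$ such that for all $x,y,z\in H_0$, $a,b\in H_1$: $\partial\{x,y\}=[x,y]$; $\{\partial a,\partial b\}=[a,b]$; $\{\partial a,x\}=\{x,\partial a\}^{-1}$; $\{x,yz\}=\{x,y\}\{x,z\}\{zxz^{-1}x^{-1},y\}$; $\{xy,z\}=\{x,yzy^{-1}\}\{y,z\}$. $\mathbf Z_0(\mathbf G_* )$ is the set of pairs $(x,\xi)$, $x\in G_0$, $\xi:G_0\to G_1$ a map, with (Z1) $\partial\xi(t)=[x,t]$, (Z2) $\xi(\partial a)={}^xa\,a^{-1}$,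 (Z3) $\xi(st)=\xi(s)\,{}^s\xi(t)$ for all $s,t\in G_0$, $a\in G_1$; it is a group under $(x,\xi)(y,\eta)=(xy,\ t\mapsto{}^x\eta(t)\,\xi(t))$. $\delta(c)=(\partial c,\ t\mapsto c\,({}^tc)^{-1})$. *)

theory Defs
  imports "HOL-Algebra.Algebra"
begin

definition commut :: "('a, 'm) monoid_scheme \<Rightarrow> 'a \<Rightarrow> 'a \<Rightarrow> 'a" where
  "commut G x y = x \<otimes>\<^bsub>G\<^esub> y \<otimes>\<^bsub>G\<^esub> inv\<^bsub>G\<^esub> x \<otimes>\<^bsub>G\<^esub> inv\<^bsub>G\<^esub> y"

definition crossed_module ::
  "('a, 'm) monoid_scheme \<Rightarrow> ('b, 'n) monoid_scheme \<Rightarrow> ('a \<Rightarrow> 'b) \<Rightarrow> ('b \<Rightarrow> 'a \<Rightarrow> 'a) \<Rightarrow> bool" where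
  "crossed_module G1 G0 d act \<longleftrightarrow>
     group G1 \<and> group G0 \<and> d \<in> hom G1 G0 \<and>
     (\<forall>x\<in>carrier G0. \<forall>a\<in>carrier G1. act x a \<in> carrier G1) \<and>
     (\<forall>x\<in>carrier G0. \<forall>a\<in>carrier G1. \<forall>b\<in>carrier G1.
        act x (a \<otimes>\<^bsub>G1\<^esub> b) = act x a \<otimes>\<^bsub>G1\<^esub> act x b) \<and>
     (\<forall>a\<in>carrier G1. act \<one>\<^bsub>G0\<^esub> a = a) \<and>
     (\<forall>x\<in>carrier G0. \<forall>y\<in>carrier G0. \<forall>a\<in>carrier G1.
        act (x \<otimes>\<^bsub>G0\<^esub> y) a = act x (act y a)) \<and>
     (\<forall>x\<in>carrier G0. \<forall>a\<in>carrier G1.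
        d (act x a) = x \<otimes>\<^bsub>G0\<^esub> d a \<otimes>\<^bsub>G0\<^esub> inv\<^bsub>G0\<^esub> x) \<and>
     (\<forall>a\<in>carrier G1. \<forall>b\<in>carrier G1.
        act (d b) a = b \<otimes>\<^bsub>G1\<^esub> a \<otimes>\<^bsub>G1\<^esub> inv\<^bsub>G1\<^esub> b)"

definition braided_crossed_module ::
  "('a, 'm) monoid_scheme \<Rightarrow> ('b, 'n) monoid_scheme \<Rightarrow> ('a \<Rightarrow> 'b) \<Rightarrow> ('b \<Rightarrow> 'b \<Rightarrow> 'a) \<Rightarrow> bool" where
  "braided_crossed_module H1 H0 d br \<longleftrightarrow>
     group H1 \<and> group H0 \<and> d \<in> hom H1 H0 \<and>
     (\<forall>x\<in>carrier H0. \<forall>y\<in>carrier H0. br x y \<in> carrier H1) \<and>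
     (\<forall>x\<in>carrier H0. \<forall>y\<in>carrier H0. d (br x y) = commut H0 x y) \<and>
     (\<forall>a\<in>carrier H1. \<forall>b\<in>carrier H1. br (d a) (d b) = commut H1 a b) \<and>
     (\<forall>a\<in>carrier H1. \<forall>x\<in>carrier H0. br (d a) x = inv\<^bsub>H1\<^esub> (br x (d a))) \<and>
     (\<forall>x\<in>carrier H0. \<forall>y\<in>carrier H0. \<forall>z\<in>carrier H0.
        br x (y \<otimes>\<^bsub>H0\<^esub> z) =
          br x y \<otimes>\<^bsub>H1\<^esub> br x z \<otimes>\<^bsub>H1\<^esub>
          br (z \<otimes>\<^bsub>H0\<^esub> x \<otimes>\<^bsub>H0\<^esub> inv\<^bsub>H0\<^esub> z \<otimes>\<^bsub>H0\<^esub> inv\<^bsub>H0\<^esub> x) y) \<and>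
     (\<forall>x\<in>carrier H0. \<forall>y\<in>carrier H0. \<forall>z\<in>carrier H0.
        br (x \<otimes>\<^bsub>H0\<^esub> y) z =
          br x (y \<otimes>\<^bsub>H0\<^esub> z \<otimes>\<^bsub>H0\<^esub> inv\<^bsub>H0\<^esub> y) \<otimes>\<^bsub>H1\<^esub> br y z)"

text \<open>Maps \<open>\<xi> : G0 \<rightarrow> G1\<close> are represented as extensional functions
  on \<open>carrier G0\<close> (value \<open>undefined\<close> outside), so that equality of pairs is equality of maps.\<close>
definition Z0_carrier ::
  "('a, 'm) monoid_scheme \<Rightarrow> ('b, 'n) monoid_scheme \<Rightarrow> ('a \<Rightarrow> 'b) \<Rightarrow> ('b \<Rightarrow> 'a \<Rightarrow> 'a)
   \<Rightarrow> ('b \<times> ('b \<Rightarrow> 'a)) set" where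
  "Z0_carrier G1 G0 d act =
     {(x, \<xi>). x \<in> carrier G0 \<and> \<xi> \<in> carrier G0 \<rightarrow>\<^sub>E carrier G1 \<and>
        (\<forall>t\<in>carrier G0. d (\<xi> t) = commut G0 x t) \<and>
        (\<forall>a\<in>carrier G1. \<xi> (d a) = act x a \<otimes>\<^bsub>G1\<^esub> inv\<^bsub>G1\<^esub> a) \<and>
        (\<forall>s\<in>carrier G0. \<forall>t\<in>carrier G0.
           \<xi> (s \<otimes>\<^bsub>G0\<^esub> t) = \<xi> s \<otimes>\<^bsub>G1\<^esub> act s (\<xi> t))}"

definition Z0 ::
  "('a, 'm) monoid_scheme \<Rightarrow> ('b, 'n) monoid_scheme \<Rightarrow> ('a \<Rightarrow> 'b) \<Rightarrow> ('b \<Rightarrow> 'a \<Rightarrow> 'a)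
   \<Rightarrow> ('b \<times> ('b \<Rightarrow> 'a)) monoid" where
  "Z0 G1 G0 d act =
     \<lparr> carrier = Z0_carrier G1 G0 d act,
       monoid.mult = (\<lambda>(x, \<xi>) (y, \<eta>). (x \<otimes>\<^bsub>G0\<^esub> y,
                  \<lambda>t\<in>carrier G0. act x (\<eta> t) \<otimes>\<^bsub>G1\<^esub> \<xi> t)),
       one = (\<one>\<^bsub>G0\<^esub>, \<lambda>t\<in>carrier G0. \<one>\<^bsub>G1\<^esub>) \<rparr>"

definition Z0_delta ::
  "('a, 'm) monoid_scheme \<Rightarrow> ('b, 'n) monoid_scheme \<Rightarrow> ('a \<Rightarrow> 'b) \<Rightarrow> ('b \<Rightarrow> 'a \<Rightarrow> 'a)
   \<Rightarrow> 'a \<Rightarrow> 'b \<times> ('b \<Rightarrow> 'a)" where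
  "Z0_delta G1 G0 d act c = (d c, \<lambda>t\<in>carrier G0. c \<otimes>\<^bsub>G1\<^esub> inv\<^bsub>G1\<^esub> (act t c))"

definition Z0_bracket :: "'b \<times> ('b \<Rightarrow> 'a) \<Rightarrow> 'b \<times> ('b \<Rightarrow> 'a) \<Rightarrow> 'a" where
  "Z0_bracket p q = snd p (fst q)"

end

theory Submission
  imports Defs
begin

lemma (in group) cancel_ll [simp]:
  "a \<in> carrier G \<Longrightarrow> b \<in> carrier G \<Longrightarrow> a \<otimes> (inv a \<otimes> b) = b"
  by (simp add: m_assoc[symmetric])
lemma (in group) cancel_lr [simp]:
  "a \<in> carrier G \<Longrightarrow> b \<in> carrier G \<Longrightarrow> inv a \<otimes> (a \<otimes> b) = b"
  by (simp add: m_assoc[symmetric])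

lemma (in group) comm_solve:
  assumes "A \<in> carrier G" "p \<in> carrier G" "q \<in> carrier G" "A \<otimes> (q \<otimes> p) = p \<otimes> q"
  shows "A = commut G p q"
proof -
  have "A = A \<otimes> (q \<otimes> p) \<otimes> inv (q \<otimes> p)" using assms(1-3) by (simp add: m_assoc)
  also have "\<dots> = p \<otimes> q \<otimes> inv (q \<otimes> p)" using assms(4) by simp
  finally show ?thesis using assms by (simp add: commut_def m_assoc inv_mult_group)
qed

lemma (in group) conj_solve:
  assumes "A \<in> carrier G" "p \<in> carrier G" "B \<in> carrier G" "A \<otimes> p = p \<otimes> B"
  shows "A = p \<otimes> B \<otimes> inv p"
proof -
  have "A = A \<otimes> p \<otimes> inv p" using assms(1-3) by (simp add: m_assoc)
  also have "\<dots> = p \<otimes> B \<otimes> inv p" using assms(4) by simp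
  finally show ?thesis .
qed

lemma (in group) commut_inv:
  "p \<in> carrier G \<Longrightarrow> q \<in> carrier G \<Longrightarrow> inv (commut G p q) = commut G q p"
  by (simp add: commut_def m_assoc inv_mult_group)

locale xmod = G1: group G1 + G0: group G0
  for G1 :: "('a, 'm) monoid_scheme" and G0 :: "('b, 'n) monoid_scheme" +
  fixes d :: "'a \<Rightarrow> 'b" and act :: "'b \<Rightarrow> 'a \<Rightarrow> 'a"
  assumes xm: "crossed_module G1 G0 d act"
begin

lemma d_hom: "d \<in> hom G1 G0" using xm unfolding crossed_module_def by (simp only:)
lemma d_closed [simp]: "a \<in> carrier G1 \<Longrightarrow> d a \<in> carrier G0"
  by (rule hom_in_carrier[OF d_hom])
lemma d_mult [simp]: "a \<in> carrier G1 \<Longrightarrow> b \<in> carrier G1 \<Longrightarrow> d (a \<otimes>\<^bsub>G1\<^esub> b) = d a \<otimes>\<^bsub>G0\<^esub> d b"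
  using d_hom by (simp add: hom_mult)
lemma d_gh: "group_hom G1 G0 d"
  by (rule group_hom.intro[OF G1.group_axioms G0.group_axioms group_hom_axioms.intro[OF d_hom]])
lemma d_one [simp]: "d \<one>\<^bsub>G1\<^esub> = \<one>\<^bsub>G0\<^esub>"
  by (rule group_hom.hom_one[OF d_gh])
lemma d_inv [simp]: "a \<in> carrier G1 \<Longrightarrow> d (inv\<^bsub>G1\<^esub> a) = inv\<^bsub>G0\<^esub> (d a)"
  by (rule group_hom.hom_inv[OF d_gh])

lemma act_closed [simp]: "x \<in> carrier G0 \<Longrightarrow> a \<in> carrier G1 \<Longrightarrow> act x a \<in> carrier G1"
  using xm unfolding crossed_module_def by (simp only:)
lemma act_mult [simp]: "x \<in> carrier G0 \<Longrightarrow> a \<in> carrier G1 \<Longrightarrow> b \<in> carrier G1 \<Longrightarrow>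
   act x (a \<otimes>\<^bsub>G1\<^esub> b) = act x a \<otimes>\<^bsub>G1\<^esub> act x b"
  using xm unfolding crossed_module_def by (simp only:)
lemma act_one [simp]: "a \<in> carrier G1 \<Longrightarrow> act \<one>\<^bsub>G0\<^esub> a = a"
  using xm unfolding crossed_module_def by (simp only:)
lemma act_comp: "x \<in> carrier G0 \<Longrightarrow> y \<in> carrier G0 \<Longrightarrow> a \<in> carrier G1 \<Longrightarrow>
   act (x \<otimes>\<^bsub>G0\<^esub> y) a = act x (act y a)"
  using xm unfolding crossed_module_def by (simp only:)
lemma d_act [simp]: "x \<in> carrier G0 \<Longrightarrow> a \<in> carrier G1 \<Longrightarrow>
   d (act x a) = x \<otimes>\<^bsub>G0\<^esub> d a \<otimes>\<^bsub>G0\<^esub> inv\<^bsub>G0\<^esub> x"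
  using xm unfolding crossed_module_def by (simp only:)
lemma peif: "a \<in> carrier G1 \<Longrightarrow> b \<in> carrier G1 \<Longrightarrow>
   act (d b) a = b \<otimes>\<^bsub>G1\<^esub> a \<otimes>\<^bsub>G1\<^esub> inv\<^bsub>G1\<^esub> b"
  using xm unfolding crossed_module_def by (simp only:)

lemma act_unit [simp]: "x \<in> carrier G0 \<Longrightarrow> act x \<one>\<^bsub>G1\<^esub> = \<one>\<^bsub>G1\<^esub>"
proof -
  assume x: "x \<in> carrier G0"
  have c: "act x \<one>\<^bsub>G1\<^esub> \<in> carrier G1" using x by simp
  have "act x \<one>\<^bsub>G1\<^esub> = act x \<one>\<^bsub>G1\<^esub> \<otimes>\<^bsub>G1\<^esub> act x \<one>\<^bsub>G1\<^esub>"
    using act_mult[OF x G1.one_closed G1.one_closed] by (simp only: G1.l_one[OF G1.one_closed])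
  then show ?thesis using G1.l_cancel_one' c by blast
qed

lemma act_inv [simp]: "x \<in> carrier G0 \<Longrightarrow> a \<in> carrier G1 \<Longrightarrow>
   act x (inv\<^bsub>G1\<^esub> a) = inv\<^bsub>G1\<^esub> (act x a)"
proof -
  assume x: "x \<in> carrier G0" and a: "a \<in> carrier G1"
  have "act x (inv\<^bsub>G1\<^esub> a) \<otimes>\<^bsub>G1\<^esub> act x a = \<one>\<^bsub>G1\<^esub>"
    using act_mult[OF x G1.inv_closed[OF a] a, symmetric] x a by (simp only: G1.l_inv act_unit)
  then show ?thesis using x a by (simp add: G1.inv_equality)
qed

lemma act_act [simp]: "x \<in> carrier G0 \<Longrightarrow> y \<in> carrier G0 \<Longrightarrow> a \<in> carrier G1 \<Longrightarrow>
   act x (act y a) = act (x \<otimes>\<^bsub>G0\<^esub> y) a"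
  by (simp add: act_comp)

lemma swap: "u \<in> carrier G1 \<Longrightarrow> g \<in> carrier G0 \<Longrightarrow> w \<in> carrier G1 \<Longrightarrow>
   u \<otimes>\<^bsub>G1\<^esub> act g w = act (d u \<otimes>\<^bsub>G0\<^esub> g) w \<otimes>\<^bsub>G1\<^esub> u"
  proof -
  assume a: "u \<in> carrier G1" "g \<in> carrier G0" "w \<in> carrier G1"
  have "act (d u \<otimes>\<^bsub>G0\<^esub> g) w = act (d u) (act g w)" using a by (intro act_comp) simp_all
  also have "\<dots> = u \<otimes>\<^bsub>G1\<^esub> act g w \<otimes>\<^bsub>G1\<^esub> inv\<^bsub>G1\<^esub> u" using a by (intro peif) simp_all
  finally show ?thesis using a by (simp add: G1.m_assoc del: act_act)
qed


abbreviation Z where "Z \<equiv> Z0 G1 G0 d act"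

lemma Z_mem: "(x, \<xi>) \<in> carrier Z \<longleftrightarrow> x \<in> carrier G0 \<and> \<xi> \<in> carrier G0 \<rightarrow>\<^sub>E carrier G1 \<and>
        (\<forall>t\<in>carrier G0. d (\<xi> t) = commut G0 x t) \<and>
        (\<forall>a\<in>carrier G1. \<xi> (d a) = act x a \<otimes>\<^bsub>G1\<^esub> inv\<^bsub>G1\<^esub> a) \<and>
        (\<forall>s\<in>carrier G0. \<forall>t\<in>carrier G0.
           \<xi> (s \<otimes>\<^bsub>G0\<^esub> t) = \<xi> s \<otimes>\<^bsub>G1\<^esub> act s (\<xi> t))"
  by (simp add: Z0_def Z0_carrier_def)

lemma Z_mult: "(x, \<xi>) \<otimes>\<^bsub>Z\<^esub> (y, \<eta>) = (x \<otimes>\<^bsub>G0\<^esub> y,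
                  \<lambda>t\<in>carrier G0. act x (\<eta> t) \<otimes>\<^bsub>G1\<^esub> \<xi> t)"
  by (simp add: Z0_def)

lemma Z_one: "\<one>\<^bsub>Z\<^esub> = (\<one>\<^bsub>G0\<^esub>, \<lambda>t\<in>carrier G0. \<one>\<^bsub>G1\<^esub>)"
  by (simp add: Z0_def)

context
  fixes x \<xi> assumes zm: "(x, \<xi>) \<in> carrier Z"
begin
lemma Zall: "x \<in> carrier G0 \<and> \<xi> \<in> carrier G0 \<rightarrow>\<^sub>E carrier G1 \<and>
        (\<forall>t\<in>carrier G0. d (\<xi> t) = commut G0 x t) \<and>
        (\<forall>a\<in>carrier G1. \<xi> (d a) = act x a \<otimes>\<^bsub>G1\<^esub> inv\<^bsub>G1\<^esub> a) \<and>
        (\<forall>s\<in>carrier G0. \<forall>t\<in>carrier G0.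
           \<xi> (s \<otimes>\<^bsub>G0\<^esub> t) = \<xi> s \<otimes>\<^bsub>G1\<^esub> act s (\<xi> t))"
  by (rule iffD1[OF Z_mem zm])
lemma Zx [simp]: "x \<in> carrier G0" using Zall by (rule conjunct1)
lemma ZPi: "\<xi> \<in> carrier G0 \<rightarrow>\<^sub>E carrier G1" using Zall by (elim conjE)
lemma Zc [simp]: "t \<in> carrier G0 \<Longrightarrow> \<xi> t \<in> carrier G1" using ZPi by (rule PiE_mem)
lemma Zext: "\<xi> \<in> extensional (carrier G0)" using ZPi by (simp add: PiE_iff)
lemma Z1 [simp]: "t \<in> carrier G0 \<Longrightarrow> d (\<xi> t) = commut G0 x t"
  using Zall by (elim conjE) (erule bspec)
lemma Z2 [simp]: "a \<in> carrier G1 \<Longrightarrow> \<xi> (d a) = act x a \<otimes>\<^bsub>G1\<^esub> inv\<^bsub>G1\<^esub> a"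
  using Zall by (elim conjE) (erule bspec)
lemma Z3 [simp]: "s \<in> carrier G0 \<Longrightarrow> t \<in> carrier G0 \<Longrightarrow> \<xi> (s \<otimes>\<^bsub>G0\<^esub> t) = \<xi> s \<otimes>\<^bsub>G1\<^esub> act s (\<xi> t)"
  using Zall by (elim conjE) (blast)

lemma Zswap: "s \<in> carrier G0 \<Longrightarrow> h \<in> carrier G0 \<Longrightarrow> w \<in> carrier G1 \<Longrightarrow>
   \<xi> s \<otimes>\<^bsub>G1\<^esub> act h w = act (commut G0 x s \<otimes>\<^bsub>G0\<^esub> h) w \<otimes>\<^bsub>G1\<^esub> \<xi> s"
  using swap[of "\<xi> s" h w] by simp
end

lemma Z_mult_closed:
  assumes a: "(x, \<xi>) \<in> carrier Z" and b: "(y, \<eta>) \<in> carrier Z"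
  shows "(x, \<xi>) \<otimes>\<^bsub>Z\<^esub> (y, \<eta>) \<in> carrier Z"
  unfolding Z_mult Z_mem
proof (intro conjI ballI)
  show "x \<otimes>\<^bsub>G0\<^esub> y \<in> carrier G0" using a b by simp
  show "(\<lambda>t\<in>carrier G0. act x (\<eta> t) \<otimes>\<^bsub>G1\<^esub> \<xi> t) \<in> carrier G0 \<rightarrow>\<^sub>E carrier G1"
    using a b by simp
next
  fix t assume t: "t \<in> carrier G0"
  show "d ((\<lambda>t\<in>carrier G0. act x (\<eta> t) \<otimes>\<^bsub>G1\<^esub> \<xi> t) t) = commut G0 (x \<otimes>\<^bsub>G0\<^esub> y) t"
    using a b t by (simp add: commut_def G0.m_assoc G0.inv_mult_group)
next
  fix c assume c: "c \<in> carrier G1"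
  show "(\<lambda>t\<in>carrier G0. act x (\<eta> t) \<otimes>\<^bsub>G1\<^esub> \<xi> t) (d c) =
     act (x \<otimes>\<^bsub>G0\<^esub> y) c \<otimes>\<^bsub>G1\<^esub> inv\<^bsub>G1\<^esub> c"
    using a b c by (simp add: G1.m_assoc G1.inv_mult_group)
next
  fix s t assume s: "s \<in> carrier G0" and t: "t \<in> carrier G0"
  have key: "act (x \<otimes>\<^bsub>G0\<^esub> s) (\<eta> t) \<otimes>\<^bsub>G1\<^esub> \<xi> s = \<xi> s \<otimes>\<^bsub>G1\<^esub> act (s \<otimes>\<^bsub>G0\<^esub> x) (\<eta> t)"
  proof -
    have e: "commut G0 x s \<otimes>\<^bsub>G0\<^esub> (s \<otimes>\<^bsub>G0\<^esub> x) = x \<otimes>\<^bsub>G0\<^esub> s"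
      using a s by (simp add: commut_def G0.m_assoc)
    show ?thesis using Zswap[OF a s _ Zc[OF b t], of "s \<otimes>\<^bsub>G0\<^esub> x"] a s e by simp
  qed
  have "act x (\<eta> (s \<otimes>\<^bsub>G0\<^esub> t)) \<otimes>\<^bsub>G1\<^esub> \<xi> (s \<otimes>\<^bsub>G0\<^esub> t) =
     act x (\<eta> s) \<otimes>\<^bsub>G1\<^esub> (act (x \<otimes>\<^bsub>G0\<^esub> s) (\<eta> t) \<otimes>\<^bsub>G1\<^esub> \<xi> s) \<otimes>\<^bsub>G1\<^esub> act s (\<xi> t)"
    using a b s t by (simp add: G1.m_assoc)
  also have "\<dots> = act x (\<eta> s) \<otimes>\<^bsub>G1\<^esub> \<xi> s \<otimes>\<^bsub>G1\<^esub> act s (act x (\<eta> t) \<otimes>\<^bsub>G1\<^esub> \<xi> t)"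
    unfolding key using a b s t by (simp add: G1.m_assoc)
  finally show "(\<lambda>t\<in>carrier G0. act x (\<eta> t) \<otimes>\<^bsub>G1\<^esub> \<xi> t) (s \<otimes>\<^bsub>G0\<^esub> t) =
       (\<lambda>t\<in>carrier G0. act x (\<eta> t) \<otimes>\<^bsub>G1\<^esub> \<xi> t) s \<otimes>\<^bsub>G1\<^esub>
       act s ((\<lambda>t\<in>carrier G0. act x (\<eta> t) \<otimes>\<^bsub>G1\<^esub> \<xi> t) t)"
    using s t by simp
qed


lemma Z_mult_closed': "p \<in> carrier Z \<Longrightarrow> q \<in> carrier Z \<Longrightarrow> p \<otimes>\<^bsub>Z\<^esub> q \<in> carrier Z"
  using Z_mult_closed[of "fst p" "snd p" "fst q" "snd q"] by simp

lemma Z_one_mem: "\<one>\<^bsub>Z\<^esub> \<in> carrier Z"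
  unfolding Z_one Z_mem by (simp add: commut_def)

lemma Z_assoc:
  assumes a: "(x, \<xi>) \<in> carrier Z" and b: "(y, \<eta>) \<in> carrier Z" and c: "(z, \<theta>) \<in> carrier Z"
  shows "(x, \<xi>) \<otimes>\<^bsub>Z\<^esub> (y, \<eta>) \<otimes>\<^bsub>Z\<^esub> (z, \<theta>) = (x, \<xi>) \<otimes>\<^bsub>Z\<^esub> ((y, \<eta>) \<otimes>\<^bsub>Z\<^esub> (z, \<theta>))"
  using a b c by (auto simp: Z_mult fun_eq_iff G1.m_assoc G0.m_assoc)

lemma Z_l_one:
  assumes a: "(x, \<xi>) \<in> carrier Z"
  shows "\<one>\<^bsub>Z\<^esub> \<otimes>\<^bsub>Z\<^esub> (x, \<xi>) = (x, \<xi>)"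
proof -
  have "restrict \<xi> (carrier G0) = \<xi>" using Zext[OF a] by (rule extensional_restrict)
  moreover have "(\<lambda>t\<in>carrier G0. act \<one>\<^bsub>G0\<^esub> (\<xi> t) \<otimes>\<^bsub>G1\<^esub> (\<lambda>t\<in>carrier G0. \<one>\<^bsub>G1\<^esub>) t)
     = restrict \<xi> (carrier G0)" by (rule restrict_ext) (simp add: Zc[OF a])
  ultimately show ?thesis unfolding Z_one Z_mult using a by simp
qed

definition Zinv where "Zinv x \<xi> = (inv\<^bsub>G0\<^esub> x, \<lambda>t\<in>carrier G0. act (inv\<^bsub>G0\<^esub> x) (inv\<^bsub>G1\<^esub> (\<xi> t)))"

lemma Zinv_l: assumes a: "(x, \<xi>) \<in> carrier Z"
  shows "Zinv x \<xi> \<otimes>\<^bsub>Z\<^esub> (x, \<xi>) = \<one>\<^bsub>Z\<^esub>"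
  using a by (auto simp: Zinv_def Z_mult Z_one fun_eq_iff)

lemma Zinv_mem: assumes a: "(x, \<xi>) \<in> carrier Z"
  shows "Zinv x \<xi> \<in> carrier Z"
  unfolding Zinv_def Z_mem
proof (intro conjI ballI)
  show "inv\<^bsub>G0\<^esub> x \<in> carrier G0" using a by simp
  show "(\<lambda>t\<in>carrier G0. act (inv\<^bsub>G0\<^esub> x) (inv\<^bsub>G1\<^esub> (\<xi> t))) \<in> carrier G0 \<rightarrow>\<^sub>E carrier G1"
    using a by simp
next
  fix t assume t: "t \<in> carrier G0"
  show "d ((\<lambda>t\<in>carrier G0. act (inv\<^bsub>G0\<^esub> x) (inv\<^bsub>G1\<^esub> (\<xi> t))) t) = commut G0 (inv\<^bsub>G0\<^esub> x) t"
    using a t by (simp add: commut_def G0.m_assoc G0.inv_mult_group)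
next
  fix c assume c: "c \<in> carrier G1"
  show "(\<lambda>t\<in>carrier G0. act (inv\<^bsub>G0\<^esub> x) (inv\<^bsub>G1\<^esub> (\<xi> t))) (d c) =
     act (inv\<^bsub>G0\<^esub> x) c \<otimes>\<^bsub>G1\<^esub> inv\<^bsub>G1\<^esub> c"
    using a c by (simp add: G1.m_assoc G1.inv_mult_group)
next
  fix s t assume s: "s \<in> carrier G0" and t: "t \<in> carrier G0"
  let ?x = "inv\<^bsub>G0\<^esub> x"
  let ?u = "inv\<^bsub>G1\<^esub> (act ?x (\<xi> s))"
  have du: "d ?u \<otimes>\<^bsub>G0\<^esub> (s \<otimes>\<^bsub>G0\<^esub> ?x) = ?x \<otimes>\<^bsub>G0\<^esub> s"
    using a s by (simp add: commut_def G0.m_assoc G0.inv_mult_group)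
  have key: "?u \<otimes>\<^bsub>G1\<^esub> act (s \<otimes>\<^bsub>G0\<^esub> ?x) (inv\<^bsub>G1\<^esub> (\<xi> t)) =
     act (?x \<otimes>\<^bsub>G0\<^esub> s) (inv\<^bsub>G1\<^esub> (\<xi> t)) \<otimes>\<^bsub>G1\<^esub> ?u"
    using swap[of ?u "s \<otimes>\<^bsub>G0\<^esub> ?x" "inv\<^bsub>G1\<^esub> (\<xi> t)"] a s t du by (simp del: act_inv d_inv d_act)
  have "act ?x (inv\<^bsub>G1\<^esub> (\<xi> (s \<otimes>\<^bsub>G0\<^esub> t))) =
     act (?x \<otimes>\<^bsub>G0\<^esub> s) (inv\<^bsub>G1\<^esub> (\<xi> t)) \<otimes>\<^bsub>G1\<^esub> ?u"
    using a s t by (simp add: G1.inv_mult_group del: act_act) (simp add: act_comp del: act_act)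
  also have "\<dots> = ?u \<otimes>\<^bsub>G1\<^esub> act (s \<otimes>\<^bsub>G0\<^esub> ?x) (inv\<^bsub>G1\<^esub> (\<xi> t))" using key by simp
  also have "\<dots> = act ?x (inv\<^bsub>G1\<^esub> (\<xi> s)) \<otimes>\<^bsub>G1\<^esub> act s (act ?x (inv\<^bsub>G1\<^esub> (\<xi> t)))"
    using a s t by simp
  finally show "(\<lambda>t\<in>carrier G0. act ?x (inv\<^bsub>G1\<^esub> (\<xi> t))) (s \<otimes>\<^bsub>G0\<^esub> t) =
       (\<lambda>t\<in>carrier G0. act ?x (inv\<^bsub>G1\<^esub> (\<xi> t))) s \<otimes>\<^bsub>G1\<^esub>
       act s ((\<lambda>t\<in>carrier G0. act ?x (inv\<^bsub>G1\<^esub> (\<xi> t))) t)"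
    using s t by simp
qed

lemma Z_group: "group Z"
proof (rule groupI)
  show "\<one>\<^bsub>Z\<^esub> \<in> carrier Z" by (rule Z_one_mem)
next
  fix p q assume "p \<in> carrier Z" "q \<in> carrier Z"
  then show "p \<otimes>\<^bsub>Z\<^esub> q \<in> carrier Z" by (rule Z_mult_closed')
next
  fix p q r assume "p \<in> carrier Z" "q \<in> carrier Z" "r \<in> carrier Z"
  then show "p \<otimes>\<^bsub>Z\<^esub> q \<otimes>\<^bsub>Z\<^esub> r = p \<otimes>\<^bsub>Z\<^esub> (q \<otimes>\<^bsub>Z\<^esub> r)"
    using Z_assoc[of "fst p" "snd p" "fst q" "snd q" "fst r" "snd r"] by simp
next
  fix p assume "p \<in> carrier Z"
  then show "\<one>\<^bsub>Z\<^esub> \<otimes>\<^bsub>Z\<^esub> p = p" using Z_l_one[of "fst p" "snd p"] by simp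
next
  fix p assume "p \<in> carrier Z"
  then show "\<exists>q\<in>carrier Z. q \<otimes>\<^bsub>Z\<^esub> p = \<one>\<^bsub>Z\<^esub>"
    using Zinv_mem[of "fst p" "snd p"] Zinv_l[of "fst p" "snd p"] by (intro bexI[of _ "Zinv (fst p) (snd p)"]) auto
qed

lemma Z_inv: "(x, \<xi>) \<in> carrier Z \<Longrightarrow> inv\<^bsub>Z\<^esub> (x, \<xi>) = Zinv x \<xi>"
  by (rule group.inv_equality[OF Z_group Zinv_l _ Zinv_mem])


abbreviation D where "D \<equiv> Z0_delta G1 G0 d act"

lemma D_eq: "D c = (d c, \<lambda>t\<in>carrier G0. c \<otimes>\<^bsub>G1\<^esub> inv\<^bsub>G1\<^esub> (act t c))"
  by (simp add: Z0_delta_def)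

lemma D_mem: assumes c: "c \<in> carrier G1" shows "D c \<in> carrier Z"
  unfolding D_eq Z_mem
proof (intro conjI ballI)
  show "d c \<in> carrier G0" using c by simp
  show "(\<lambda>t\<in>carrier G0. c \<otimes>\<^bsub>G1\<^esub> inv\<^bsub>G1\<^esub> (act t c)) \<in> carrier G0 \<rightarrow>\<^sub>E carrier G1"
    using c by simp
next
  fix t assume t: "t \<in> carrier G0"
  show "d ((\<lambda>t\<in>carrier G0. c \<otimes>\<^bsub>G1\<^esub> inv\<^bsub>G1\<^esub> (act t c)) t) = commut G0 (d c) t"
    using c t by (simp add: commut_def G0.m_assoc G0.inv_mult_group)
next
  fix a assume a: "a \<in> carrier G1"
  show "(\<lambda>t\<in>carrier G0. c \<otimes>\<^bsub>G1\<^esub> inv\<^bsub>G1\<^esub> (act t c)) (d a) = act (d c) a \<otimes>\<^bsub>G1\<^esub> inv\<^bsub>G1\<^esub> a"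
    using a c by (simp add: peif G1.m_assoc G1.inv_mult_group)
next
  fix s t assume s: "s \<in> carrier G0" and t: "t \<in> carrier G0"
  show "(\<lambda>t\<in>carrier G0. c \<otimes>\<^bsub>G1\<^esub> inv\<^bsub>G1\<^esub> (act t c)) (s \<otimes>\<^bsub>G0\<^esub> t) =
       (\<lambda>t\<in>carrier G0. c \<otimes>\<^bsub>G1\<^esub> inv\<^bsub>G1\<^esub> (act t c)) s \<otimes>\<^bsub>G1\<^esub>
       act s ((\<lambda>t\<in>carrier G0. c \<otimes>\<^bsub>G1\<^esub> inv\<^bsub>G1\<^esub> (act t c)) t)"
    using c s t by (simp add: G1.m_assoc G1.inv_mult_group)
qed

lemma D_mult: assumes a: "a \<in> carrier G1" and b: "b \<in> carrier G1"
  shows "D (a \<otimes>\<^bsub>G1\<^esub> b) = D a \<otimes>\<^bsub>Z\<^esub> D b"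
  unfolding D_eq Z_mult using a b
  by (auto simp: fun_eq_iff peif G1.m_assoc G1.inv_mult_group simp del: act_act)

lemma D_hom: "D \<in> hom G1 Z"
  by (rule homI) (simp_all add: D_mem D_mult)

lemma D_gh: "group_hom G1 Z D"
  by (rule group_hom.intro[OF G1.group_axioms Z_group group_hom_axioms.intro[OF D_hom]])

lemma D_inv: "a \<in> carrier G1 \<Longrightarrow> D (inv\<^bsub>G1\<^esub> a) = inv\<^bsub>Z\<^esub> (D a)"
  by (rule group_hom.hom_inv[OF D_gh])

lemma br_commut:
  assumes p: "(x, \<xi>) \<in> carrier Z" and q: "(y, \<eta>) \<in> carrier Z"
  shows "D (\<xi> y) = commut Z (x, \<xi>) (y, \<eta>)"
proof (rule group.comm_solve[OF Z_group])
  have y: "y \<in> carrier G0" using q by simp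
  show "D (\<xi> y) \<in> carrier Z" using D_mem Zc[OF p y] by blast
  show "(x, \<xi>) \<in> carrier Z" "(y, \<eta>) \<in> carrier Z" by (fact p, fact q)
  show "D (\<xi> y) \<otimes>\<^bsub>Z\<^esub> ((y, \<eta>) \<otimes>\<^bsub>Z\<^esub> (x, \<xi>)) = (x, \<xi>) \<otimes>\<^bsub>Z\<^esub> (y, \<eta>)"
  proof -
    have e: "D (\<xi> y) \<otimes>\<^bsub>Z\<^esub> ((y, \<eta>) \<otimes>\<^bsub>Z\<^esub> (x, \<xi>)) = (d (\<xi> y) \<otimes>\<^bsub>G0\<^esub> (y \<otimes>\<^bsub>G0\<^esub> x),
      \<lambda>t\<in>carrier G0. act (d (\<xi> y)) (act y (\<xi> t) \<otimes>\<^bsub>G1\<^esub> \<eta> t) \<otimes>\<^bsub>G1\<^esub>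
          (\<xi> y \<otimes>\<^bsub>G1\<^esub> inv\<^bsub>G1\<^esub> (act t (\<xi> y))))"
      unfolding D_eq Z_mult by (rule arg_cong[where f="Pair _"], rule restrict_ext) (simp only: restrict_apply')
    have f: "d (\<xi> y) \<otimes>\<^bsub>G0\<^esub> (y \<otimes>\<^bsub>G0\<^esub> x) = x \<otimes>\<^bsub>G0\<^esub> y"
      using p y by (simp add: commut_def G0.m_assoc)
    have g: "(\<lambda>t\<in>carrier G0. act (d (\<xi> y)) (act y (\<xi> t) \<otimes>\<^bsub>G1\<^esub> \<eta> t) \<otimes>\<^bsub>G1\<^esub>
          (\<xi> y \<otimes>\<^bsub>G1\<^esub> inv\<^bsub>G1\<^esub> (act t (\<xi> y)))) =
          (\<lambda>t\<in>carrier G0. act x (\<eta> t) \<otimes>\<^bsub>G1\<^esub> \<xi> t)"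
    proof (rule restrict_ext)
      fix t assume t: "t \<in> carrier G0"
      let ?c = "commut G0 y t"
      have cc: "?c \<in> carrier G0" using y t by (simp add: commut_def)
      have yt: "y \<otimes>\<^bsub>G0\<^esub> t = ?c \<otimes>\<^bsub>G0\<^esub> (t \<otimes>\<^bsub>G0\<^esub> y)" using y t by (simp add: commut_def G0.m_assoc)
      have h1: "\<xi> y \<otimes>\<^bsub>G1\<^esub> act y (\<xi> t) = \<xi> ?c \<otimes>\<^bsub>G1\<^esub> (\<eta> t \<otimes>\<^bsub>G1\<^esub> (\<xi> t \<otimes>\<^bsub>G1\<^esub> act t (\<xi> y)) \<otimes>\<^bsub>G1\<^esub> inv\<^bsub>G1\<^esub> (\<eta> t))"
      proof -
        have "\<xi> y \<otimes>\<^bsub>G1\<^esub> act y (\<xi> t) = \<xi> (y \<otimes>\<^bsub>G0\<^esub> t)" using p y t by simp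
        also have "\<dots> = \<xi> (?c \<otimes>\<^bsub>G0\<^esub> (t \<otimes>\<^bsub>G0\<^esub> y))" by (simp only: yt)
        also have "\<dots> = \<xi> ?c \<otimes>\<^bsub>G1\<^esub> act ?c (\<xi> t \<otimes>\<^bsub>G1\<^esub> act t (\<xi> y))"
          using Z3[OF p cc, of "t \<otimes>\<^bsub>G0\<^esub> y"] Z3[OF p t y] y t by simp
        also have "act ?c (\<xi> t \<otimes>\<^bsub>G1\<^esub> act t (\<xi> y)) = act (d (\<eta> t)) (\<xi> t \<otimes>\<^bsub>G1\<^esub> act t (\<xi> y))"
          using Z1[OF q t] by simp
        also have "\<dots> = \<eta> t \<otimes>\<^bsub>G1\<^esub> (\<xi> t \<otimes>\<^bsub>G1\<^esub> act t (\<xi> y)) \<otimes>\<^bsub>G1\<^esub> inv\<^bsub>G1\<^esub> (\<eta> t)"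
          using p q y t by (intro peif) simp_all
        finally show ?thesis .
      qed
      have h2: "act x (\<eta> t) = \<xi> ?c \<otimes>\<^bsub>G1\<^esub> \<eta> t"
      proof -
        have "\<xi> (d (\<eta> t)) = act x (\<eta> t) \<otimes>\<^bsub>G1\<^esub> inv\<^bsub>G1\<^esub> (\<eta> t)" using Z2[OF p, of "\<eta> t"] q t by simp
        then have "\<xi> ?c = act x (\<eta> t) \<otimes>\<^bsub>G1\<^esub> inv\<^bsub>G1\<^esub> (\<eta> t)" using Z1[OF q t] by simp
        then show ?thesis using p q t cc by (simp add: G1.m_assoc)
      qed
      have "act (d (\<xi> y)) (act y (\<xi> t) \<otimes>\<^bsub>G1\<^esub> \<eta> t) = \<xi> y \<otimes>\<^bsub>G1\<^esub> (act y (\<xi> t) \<otimes>\<^bsub>G1\<^esub> \<eta> t) \<otimes>\<^bsub>G1\<^esub> inv\<^bsub>G1\<^esub> (\<xi> y)"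
        using p q y t by (intro peif) simp_all
      then have "act (d (\<xi> y)) (act y (\<xi> t) \<otimes>\<^bsub>G1\<^esub> \<eta> t) \<otimes>\<^bsub>G1\<^esub>
          (\<xi> y \<otimes>\<^bsub>G1\<^esub> inv\<^bsub>G1\<^esub> (act t (\<xi> y))) =
          (\<xi> y \<otimes>\<^bsub>G1\<^esub> act y (\<xi> t)) \<otimes>\<^bsub>G1\<^esub> \<eta> t \<otimes>\<^bsub>G1\<^esub> inv\<^bsub>G1\<^esub> (act t (\<xi> y))"
        using p q y t by (simp add: G1.m_assoc)
      also have "\<dots> = \<xi> ?c \<otimes>\<^bsub>G1\<^esub> \<eta> t \<otimes>\<^bsub>G1\<^esub> \<xi> t"
        unfolding h1 using p q y t cc by (simp add: G1.m_assoc)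
      also have "\<dots> = act x (\<eta> t) \<otimes>\<^bsub>G1\<^esub> \<xi> t" unfolding h2 ..
      finally show "act (d (\<xi> y)) (act y (\<xi> t) \<otimes>\<^bsub>G1\<^esub> \<eta> t) \<otimes>\<^bsub>G1\<^esub>
          (\<xi> y \<otimes>\<^bsub>G1\<^esub> inv\<^bsub>G1\<^esub> (act t (\<xi> y))) = act x (\<eta> t) \<otimes>\<^bsub>G1\<^esub> \<xi> t" .
    qed
    show ?thesis unfolding e f g by (simp only: Z_mult)
  qed
qed


lemma h2lem:
  assumes p: "(x, \<xi>) \<in> carrier Z" and q: "(y, \<eta>) \<in> carrier Z" and t: "t \<in> carrier G0"
  shows "act x (\<eta> t) = \<xi> (commut G0 y t) \<otimes>\<^bsub>G1\<^esub> \<eta> t"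
proof -
  have cc: "commut G0 y t \<in> carrier G0" using q t by (simp add: commut_def)
  have "\<xi> (d (\<eta> t)) = act x (\<eta> t) \<otimes>\<^bsub>G1\<^esub> inv\<^bsub>G1\<^esub> (\<eta> t)" using Z2[OF p, of "\<eta> t"] q t by simp
  then have "\<xi> (commut G0 y t) = act x (\<eta> t) \<otimes>\<^bsub>G1\<^esub> inv\<^bsub>G1\<^esub> (\<eta> t)" using Z1[OF q t] by simp
  then show ?thesis using p q t cc by (simp add: G1.m_assoc)
qed

lemma br_closed: "p \<in> carrier Z \<Longrightarrow> q \<in> carrier Z \<Longrightarrow> Z0_bracket p q \<in> carrier G1"
  unfolding Z0_bracket_def using Zc[of "fst p" "snd p" "fst q"] Zx[of "fst q" "snd q"] by simp

lemma br_d: "p \<in> carrier Z \<Longrightarrow> q \<in> carrier Z \<Longrightarrow> D (Z0_bracket p q) = commut Z p q"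
  unfolding Z0_bracket_def using br_commut[of "fst p" "snd p" "fst q" "snd q"] by simp

lemma br_DD: "a \<in> carrier G1 \<Longrightarrow> b \<in> carrier G1 \<Longrightarrow> Z0_bracket (D a) (D b) = commut G1 a b"
  unfolding Z0_bracket_def D_eq by (simp add: peif commut_def G1.m_assoc G1.inv_mult_group)

lemma br_Dx: assumes a: "a \<in> carrier G1" and pp: "p \<in> carrier Z"
  shows "Z0_bracket (D a) p = inv\<^bsub>G1\<^esub> (Z0_bracket p (D a))"
proof -
  have p: "(fst p, snd p) \<in> carrier Z" using pp by simp
  show ?thesis unfolding Z0_bracket_def D_eq
    using Z2[OF p a] Zx[OF p] a by (simp add: G1.inv_mult_group)
qed

lemma br_right:
  assumes pp: "p \<in> carrier Z" and qq: "q \<in> carrier Z" and rr: "r \<in> carrier Z"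
  shows "Z0_bracket p (q \<otimes>\<^bsub>Z\<^esub> r) = Z0_bracket p q \<otimes>\<^bsub>G1\<^esub> Z0_bracket p r \<otimes>\<^bsub>G1\<^esub>
          Z0_bracket (r \<otimes>\<^bsub>Z\<^esub> p \<otimes>\<^bsub>Z\<^esub> inv\<^bsub>Z\<^esub> r \<otimes>\<^bsub>Z\<^esub> inv\<^bsub>Z\<^esub> p) q"
proof -
  obtain x \<xi> where P: "p = (x, \<xi>)" by (cases p)
  obtain y \<eta> where Q: "q = (y, \<eta>)" by (cases q)
  obtain z \<theta> where R: "r = (z, \<theta>)" by (cases r)
  have p: "(x, \<xi>) \<in> carrier Z" using pp P by simp
  have q: "(y, \<eta>) \<in> carrier Z" using qq Q by simp
  have r: "(z, \<theta>) \<in> carrier Z" using rr R by simp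
  have y: "y \<in> carrier G0" using q by simp
  have z: "z \<in> carrier G0" using r by simp
  have xz: "\<xi> z \<in> carrier G1" using p z by simp
  have "r \<otimes>\<^bsub>Z\<^esub> p \<otimes>\<^bsub>Z\<^esub> inv\<^bsub>Z\<^esub> r \<otimes>\<^bsub>Z\<^esub> inv\<^bsub>Z\<^esub> p = commut Z r p" by (simp add: commut_def)
  also have "\<dots> = inv\<^bsub>Z\<^esub> (commut Z p r)" using group.commut_inv[OF Z_group pp rr] by simp
  also have "\<dots> = inv\<^bsub>Z\<^esub> (D (\<xi> z))" using br_commut[OF p r] P R by simp
  also have "\<dots> = D (inv\<^bsub>G1\<^esub> (\<xi> z))" using D_inv[OF xz] by simp
  finally have e: "r \<otimes>\<^bsub>Z\<^esub> p \<otimes>\<^bsub>Z\<^esub> inv\<^bsub>Z\<^esub> r \<otimes>\<^bsub>Z\<^esub> inv\<^bsub>Z\<^esub> p = D (inv\<^bsub>G1\<^esub> (\<xi> z))" .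
  have "Z0_bracket p (q \<otimes>\<^bsub>Z\<^esub> r) = \<xi> (y \<otimes>\<^bsub>G0\<^esub> z)" unfolding P Q R Z_mult Z0_bracket_def by simp
  also have "\<dots> = \<xi> y \<otimes>\<^bsub>G1\<^esub> act y (\<xi> z)" using p y z by simp
  also have "\<dots> = \<xi> y \<otimes>\<^bsub>G1\<^esub> \<xi> z \<otimes>\<^bsub>G1\<^esub> (inv\<^bsub>G1\<^esub> (\<xi> z) \<otimes>\<^bsub>G1\<^esub> inv\<^bsub>G1\<^esub> (act y (inv\<^bsub>G1\<^esub> (\<xi> z))))"
    using p y z by (simp add: G1.m_assoc)
  also have "\<dots> = Z0_bracket p q \<otimes>\<^bsub>G1\<^esub> Z0_bracket p r \<otimes>\<^bsub>G1\<^esub> Z0_bracket (D (inv\<^bsub>G1\<^esub> (\<xi> z))) q"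
    unfolding P Q R Z0_bracket_def D_eq using y by simp
  finally show ?thesis unfolding e .
qed

lemma br_left:
  assumes pp: "p \<in> carrier Z" and qq: "q \<in> carrier Z" and rr: "r \<in> carrier Z"
  shows "Z0_bracket (p \<otimes>\<^bsub>Z\<^esub> q) r =
          Z0_bracket p (q \<otimes>\<^bsub>Z\<^esub> r \<otimes>\<^bsub>Z\<^esub> inv\<^bsub>Z\<^esub> q) \<otimes>\<^bsub>G1\<^esub> Z0_bracket q r"
proof -
  obtain x \<xi> where P: "p = (x, \<xi>)" by (cases p)
  obtain y \<eta> where Q: "q = (y, \<eta>)" by (cases q)
  obtain z \<theta> where R: "r = (z, \<theta>)" by (cases r)
  have p: "(x, \<xi>) \<in> carrier Z" using pp P by simp
  have q: "(y, \<eta>) \<in> carrier Z" using qq Q by simp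
  have r: "(z, \<theta>) \<in> carrier Z" using rr R by simp
  have y: "y \<in> carrier G0" using q by simp
  have z: "z \<in> carrier G0" using r by simp
  let ?c = "commut G0 y z"
  have cc: "?c \<in> carrier G0" using y z by (simp add: commut_def)
  have f: "fst (q \<otimes>\<^bsub>Z\<^esub> r \<otimes>\<^bsub>Z\<^esub> inv\<^bsub>Z\<^esub> q) = ?c \<otimes>\<^bsub>G0\<^esub> z"
    unfolding Q R Z_inv[OF q] Zinv_def Z_mult using y z by (simp add: commut_def G0.m_assoc)
  have "Z0_bracket p (q \<otimes>\<^bsub>Z\<^esub> r \<otimes>\<^bsub>Z\<^esub> inv\<^bsub>Z\<^esub> q) \<otimes>\<^bsub>G1\<^esub> Z0_bracket q r
     = \<xi> (?c \<otimes>\<^bsub>G0\<^esub> z) \<otimes>\<^bsub>G1\<^esub> \<eta> z"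
    unfolding Z0_bracket_def f unfolding P Q R by simp
  also have "\<dots> = \<xi> ?c \<otimes>\<^bsub>G1\<^esub> act (d (\<eta> z)) (\<xi> z) \<otimes>\<^bsub>G1\<^esub> \<eta> z"
    using Z3[OF p cc z] Z1[OF q z] by simp
  also have "\<dots> = \<xi> ?c \<otimes>\<^bsub>G1\<^esub> (\<eta> z \<otimes>\<^bsub>G1\<^esub> \<xi> z \<otimes>\<^bsub>G1\<^esub> inv\<^bsub>G1\<^esub> (\<eta> z)) \<otimes>\<^bsub>G1\<^esub> \<eta> z"
    using p q z by (subst peif) simp_all
  also have "\<dots> = (\<xi> ?c \<otimes>\<^bsub>G1\<^esub> \<eta> z) \<otimes>\<^bsub>G1\<^esub> \<xi> z"
    using p q z cc by (simp add: G1.m_assoc)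
  also have "\<dots> = act x (\<eta> z) \<otimes>\<^bsub>G1\<^esub> \<xi> z" using h2lem[OF p q z] by simp
  also have "\<dots> = Z0_bracket (p \<otimes>\<^bsub>Z\<^esub> q) r" unfolding P Q R Z_mult Z0_bracket_def using z by simp
  finally show ?thesis by simp
qed

lemma D_conj:
  assumes pp: "p \<in> carrier Z" and a: "a \<in> carrier G1"
  shows "D (act (fst p) a) = p \<otimes>\<^bsub>Z\<^esub> D a \<otimes>\<^bsub>Z\<^esub> inv\<^bsub>Z\<^esub> p"
proof -
  obtain x \<xi> where P: "p = (x, \<xi>)" by (cases p)
  have p: "(x, \<xi>) \<in> carrier Z" using pp P by simp
  have x: "x \<in> carrier G0" using p by simp
  have e1: "D (act x a) \<otimes>\<^bsub>Z\<^esub> (x, \<xi>) = (d (act x a) \<otimes>\<^bsub>G0\<^esub> x,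
     \<lambda>t\<in>carrier G0. act (d (act x a)) (\<xi> t) \<otimes>\<^bsub>G1\<^esub> (act x a \<otimes>\<^bsub>G1\<^esub> inv\<^bsub>G1\<^esub> (act t (act x a))))"
    unfolding D_eq Z_mult by (rule arg_cong[where f="Pair _"], rule restrict_ext) (simp only: restrict_apply')
  have e2: "(x, \<xi>) \<otimes>\<^bsub>Z\<^esub> D a = (x \<otimes>\<^bsub>G0\<^esub> d a,
     \<lambda>t\<in>carrier G0. act x (a \<otimes>\<^bsub>G1\<^esub> inv\<^bsub>G1\<^esub> (act t a)) \<otimes>\<^bsub>G1\<^esub> \<xi> t)"
    unfolding D_eq Z_mult by (rule arg_cong[where f="Pair _"], rule restrict_ext) (simp only: restrict_apply')
  have f: "d (act x a) \<otimes>\<^bsub>G0\<^esub> x = x \<otimes>\<^bsub>G0\<^esub> d a" using x a by (simp add: G0.m_assoc)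
  have g: "(\<lambda>t\<in>carrier G0. act (d (act x a)) (\<xi> t) \<otimes>\<^bsub>G1\<^esub> (act x a \<otimes>\<^bsub>G1\<^esub> inv\<^bsub>G1\<^esub> (act t (act x a))))
     = (\<lambda>t\<in>carrier G0. act x (a \<otimes>\<^bsub>G1\<^esub> inv\<^bsub>G1\<^esub> (act t a)) \<otimes>\<^bsub>G1\<^esub> \<xi> t)"
  proof (rule restrict_ext)
    fix t assume t: "t \<in> carrier G0"
    have ee: "commut G0 x t \<otimes>\<^bsub>G0\<^esub> (t \<otimes>\<^bsub>G0\<^esub> x) = x \<otimes>\<^bsub>G0\<^esub> t" using x t by (simp add: commut_def G0.m_assoc)
    have key: "\<xi> t \<otimes>\<^bsub>G1\<^esub> inv\<^bsub>G1\<^esub> (act (t \<otimes>\<^bsub>G0\<^esub> x) a) = inv\<^bsub>G1\<^esub> (act (x \<otimes>\<^bsub>G0\<^esub> t) a) \<otimes>\<^bsub>G1\<^esub> \<xi> t"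
      using Zswap[OF p t _ G1.inv_closed[OF a], of "t \<otimes>\<^bsub>G0\<^esub> x"] x t a ee by simp
    have "act (d (act x a)) (\<xi> t) = act x a \<otimes>\<^bsub>G1\<^esub> \<xi> t \<otimes>\<^bsub>G1\<^esub> inv\<^bsub>G1\<^esub> (act x a)"
      using p x t a by (intro peif) simp_all
    then have "act (d (act x a)) (\<xi> t) \<otimes>\<^bsub>G1\<^esub> (act x a \<otimes>\<^bsub>G1\<^esub> inv\<^bsub>G1\<^esub> (act t (act x a)))
       = act x a \<otimes>\<^bsub>G1\<^esub> (\<xi> t \<otimes>\<^bsub>G1\<^esub> inv\<^bsub>G1\<^esub> (act (t \<otimes>\<^bsub>G0\<^esub> x) a))"
      using p x t a by (simp add: G1.m_assoc)
    also have "\<dots> = act x (a \<otimes>\<^bsub>G1\<^esub> inv\<^bsub>G1\<^esub> (act t a)) \<otimes>\<^bsub>G1\<^esub> \<xi> t"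
      unfolding key using p x t a by (simp add: G1.m_assoc)
    finally show "act (d (act x a)) (\<xi> t) \<otimes>\<^bsub>G1\<^esub> (act x a \<otimes>\<^bsub>G1\<^esub> inv\<^bsub>G1\<^esub> (act t (act x a)))
       = act x (a \<otimes>\<^bsub>G1\<^esub> inv\<^bsub>G1\<^esub> (act t a)) \<otimes>\<^bsub>G1\<^esub> \<xi> t" .
  qed
  have "D (act x a) \<otimes>\<^bsub>Z\<^esub> (x, \<xi>) = (x, \<xi>) \<otimes>\<^bsub>Z\<^esub> D a" unfolding e1 e2 f g ..
  then have "D (act x a) = (x, \<xi>) \<otimes>\<^bsub>Z\<^esub> D a \<otimes>\<^bsub>Z\<^esub> inv\<^bsub>Z\<^esub> (x, \<xi>)"
    using group.conj_solve[OF Z_group D_mem[OF act_closed[OF x a]] p D_mem[OF a]] by simp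
  then show ?thesis using P by simp
qed

end

theorem corollary3p8:
  fixes G1 :: "('a, 'm) monoid_scheme" and G0 :: "('b, 'n) monoid_scheme"
    and d :: "'a \<Rightarrow> 'b" and act :: "'b \<Rightarrow> 'a \<Rightarrow> 'a"
  assumes "crossed_module G1 G0 d act"
  shows "braided_crossed_module G1 (Z0 G1 G0 d act) (Z0_delta G1 G0 d act) Z0_bracket
    \<and> (\<forall>z\<in>carrier (Z0 G1 G0 d act). \<forall>a\<in>carrier G1.
          Z0_bracket z (Z0_delta G1 G0 d act a) \<otimes>\<^bsub>G1\<^esub> a = act (fst z) a)
    \<and> crossed_module G1 (Z0 G1 G0 d act) (Z0_delta G1 G0 d act) (\<lambda>z a. act (fst z) a)"
proof -
  have g1: "group G1" and g0: "group G0" using assms unfolding crossed_module_def by blast+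
  interpret X: xmod G1 G0 d act by (rule xmod.intro[OF g1 g0 xmod_axioms.intro[OF assms]])
  have A: "braided_crossed_module G1 X.Z X.D Z0_bracket"
    unfolding braided_crossed_module_def
    using g1 X.Z_group X.D_hom X.br_closed X.br_d X.br_DD X.br_Dx X.br_right X.br_left
    by (simp add: Z0_bracket_def)
  have B: "\<forall>z\<in>carrier X.Z. \<forall>a\<in>carrier G1. Z0_bracket z (X.D a) \<otimes>\<^bsub>G1\<^esub> a = act (fst z) a"
  proof (intro ballI)
    fix z a assume z: "z \<in> carrier X.Z" and a: "a \<in> carrier G1"
    have zz: "(fst z, snd z) \<in> carrier X.Z" using z by simp
    show "Z0_bracket z (X.D a) \<otimes>\<^bsub>G1\<^esub> a = act (fst z) a"
      unfolding Z0_bracket_def X.D_eq using X.Z2[OF zz a] X.Zx[OF zz] a by (simp add: X.G1.m_assoc)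
  qed
  have C: "crossed_module G1 X.Z X.D (\<lambda>z a. act (fst z) a)"
    unfolding crossed_module_def
  proof (intro conjI ballI)
    show "group G1" by (fact g1)
    show "group X.Z" by (rule X.Z_group)
    show "X.D \<in> hom G1 X.Z" by (rule X.D_hom)
  next
    fix x a assume "x \<in> carrier X.Z" "a \<in> carrier G1"
    then show "act (fst x) a \<in> carrier G1" using X.Zx[of "fst x" "snd x"] by simp
  next
    fix x a b assume "x \<in> carrier X.Z" "a \<in> carrier G1" "b \<in> carrier G1"
    then show "act (fst x) (a \<otimes>\<^bsub>G1\<^esub> b) = act (fst x) a \<otimes>\<^bsub>G1\<^esub> act (fst x) b"
      using X.Zx[of "fst x" "snd x"] by simp
  next
    fix a assume "a \<in> carrier G1"
    then show "act (fst \<one>\<^bsub>X.Z\<^esub>) a = a" by (simp add: X.Z_one)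
  next
    fix x y a assume "x \<in> carrier X.Z" "y \<in> carrier X.Z" "a \<in> carrier G1"
    then show "act (fst (x \<otimes>\<^bsub>X.Z\<^esub> y)) a = act (fst x) (act (fst y) a)"
      using X.Zx[of "fst x" "snd x"] X.Zx[of "fst y" "snd y"] X.Z_mult[of "fst x" "snd x" "fst y" "snd y"]
      by simp
  next
    fix x a assume "x \<in> carrier X.Z" "a \<in> carrier G1"
    then show "X.D (act (fst x) a) = x \<otimes>\<^bsub>X.Z\<^esub> X.D a \<otimes>\<^bsub>X.Z\<^esub> inv\<^bsub>X.Z\<^esub> x" by (rule X.D_conj)
  next
    fix a b assume "a \<in> carrier G1" "b \<in> carrier G1"
    then show "act (fst (X.D b)) a = b \<otimes>\<^bsub>G1\<^esub> a \<otimes>\<^bsub>G1\<^esub> inv\<^bsub>G1\<^esub> b"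
      unfolding X.D_eq by (simp add: X.peif)
  qed
  show ?thesis using A B C by blast
qed

end
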